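(* Let $n\ge 3$ and consider the Markov chain on $\{0,1,\dots,n-1\}$ with $n\times n$ transition probability matrix $\mathbf P=(P_{ij})$ given by: $P_{00}=5/6$, $P_{01}=1/6$; $P_{10}=5/6$, $P_{12}=1/6$; for $2\le i\le n-2$: $P_{i0}=2/3$, $P_{i,i-1}=1/6$, $P_{i,i+1}=1/6$; $P_{n-1,0}=2/3$, $P_{n-1,n-2}=1/6$, $P_{n-1,n-1}=1/6$; all other entries $0$. Then the steady state probability vector $\vec\pi=(\pi_0,\dots,\pi_{n-1})$ (the unique probability vector with $\vec\pi=\vec\pi\mathbf P$) is given by $$\pi_i=\frac{B_{n-i}-B_{n-i-1}}{B_n},\qquad i=0,1,\dots,n-1.$$
   Context: The balancing numbers $B_m$ are defined by $B_0=0$, $B_1=1$, $B_{m+1}=6B_m-B_{m-1}$. *)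

theory Defs
  imports Main "HOL.Real"
begin

fun balancing :: "nat \<Rightarrow> int" where
  "balancing 0 = 0"
| "balancing (Suc 0) = 1"
| "balancing (Suc (Suc m)) = 6 * balancing (Suc m) - balancing m"

definition trans_P :: "nat \<Rightarrow> nat \<Rightarrow> nat \<Rightarrow> real" where
  "trans_P n i j =
     (if i = 0 then (if j = 0 then 5/6 else if j = 1 then 1/6 else 0)
      else if i = 1 then (if j = 0 then 5/6 else if j = 2 then 1/6 else 0)
      else if 2 \<le> i \<and> i \<le> n - 2 then
        (if j = 0 then 2/3 else if j = i - 1 then 1/6 else if j = i + 1 then 1/6 else 0)
      else if i = n - 1 then
        (if j = 0 then 2/3 else if j = n - 2 then 1/6 else if j = n - 1 then 1/6 else 0)
      else 0)"

definition stationary_prob :: "nat \<Rightarrow> (nat \<Rightarrow> nat \<Rightarrow> real) \<Rightarrow> (nat \<Rightarrow> real) \<Rightarrow> bool" where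
  "stationary_prob n P \<pi> \<longleftrightarrow>
     (\<forall>i<n. \<pi> i \<ge> 0) \<and> (\<Sum>i<n. \<pi> i) = 1 \<and>
     (\<forall>j<n. \<pi> j = (\<Sum>i<n. \<pi> i * P i j))"

end

theory Submission imports Defs begin

definition Br :: "nat \<Rightarrow> real" where "Br k = real_of_int (balancing k)"

lemma Br_rec: "Br (Suc (Suc m)) = 6 * Br (Suc m) - Br m"
  by (simp add: Br_def)

lemma Br_pos: "Br k \<ge> 0 \<and> Br (Suc k) - Br k \<ge> 1"
proof (induction k)
  case 0 then show ?case by (simp add: Br_def)
next
  case (Suc k) then show ?case using Br_rec[of k] by auto
qed

lemma Br_tele: "(\<Sum>k<n. Br (Suc k) - Br k) = Br n"
  by (induction n) (auto simp: Br_def)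

lemma P_pt:
  assumes "n \<ge> 3" "1 \<le> j" "j < n" "i < n"
  shows "trans_P n i j = (if i = j - 1 then 1/6 else 0) + (if i = j + 1 then 1/6 else 0)
     + (if i = n - 1 \<and> j = n - 1 then 1/6 else 0)"
proof (cases "i = 0")
  case True then show ?thesis using assms unfolding trans_P_def by (auto split: if_splits)
next
  case f0: False
  show ?thesis
  proof (cases "i = 1")
    case True then show ?thesis using assms unfolding trans_P_def by (auto split: if_splits)
  next
    case f1: False
    show ?thesis
    proof (cases "i \<le> n - 2")
      case True then show ?thesis using assms f0 f1 unfolding trans_P_def by (auto split: if_splits)
    next
      case False
      obtain m where n: "n = m + 3" using assms(1) by (metis add.commute le_Suc_ex)
      from False have "i = m + 2" using assms n by simp
      then show ?thesis using assms f0 f1 unfolding trans_P_def n by (auto split: if_splits)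
    qed
  qed
qed
lemma colj:
  assumes "n \<ge> 3" "1 \<le> j" "j < n"
  shows "(\<Sum>i<n. \<pi> i * trans_P n i j) = \<pi> (j-1)/6 + (if j+1<n then \<pi>(j+1)/6 else 0)
     + (if j = n-1 then \<pi> (n-1)/6 else 0)"
proof -
  have "(\<Sum>i<n. \<pi> i * trans_P n i j) = (\<Sum>i<n. (if i = j - 1 then \<pi> i/6 else 0) + (if i = j + 1 then \<pi> i/6 else 0)
     + (if j = n - 1 then (if i = n - 1 then \<pi> i/6 else 0) else 0))"
  proof (rule sum.cong[OF refl])
    fix i assume "i \<in> {..<n}"
    hence i: "i < n" by simp
    show "\<pi> i * trans_P n i j = (if i = j - 1 then \<pi> i/6 else 0) + (if i = j + 1 then \<pi> i/6 else 0)
     + (if j = n - 1 then (if i = n - 1 then \<pi> i/6 else 0) else 0)"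
      unfolding P_pt[OF assms i] distrib_left by (simp only: if_distrib) simp
  qed
  also have "\<dots> = \<pi> (j-1)/6 + (if j+1<n then \<pi>(j+1)/6 else 0)
     + (if j = n-1 then \<pi> (n-1)/6 else 0)"
    using assms less_imp_diff_less[OF assms(3)] by (simp add: sum.distrib)
  finally show ?thesis .
qed

lemma P0_pt:
  assumes "n \<ge> 3" "i < n"
  shows "trans_P n i 0 = 2/3 + (if i = 0 then 1/6 else 0) + (if i = 1 then 1/6 else 0)"
proof -
  obtain m where n: "n = m + 3" using assms(1) by (metis add.commute le_Suc_ex)
  show ?thesis
  proof (cases "i \<le> 1")
    case True then show ?thesis unfolding trans_P_def by auto
  next
    case False
    then show ?thesis using assms unfolding trans_P_def n by auto
  qed
qed

lemma col0:
  assumes "n \<ge> 3"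
  shows "(\<Sum>i<n. \<pi> i * trans_P n i 0) = 2/3 * (\<Sum>i<n. \<pi> i) + \<pi> 0 / 6 + \<pi> 1 / 6"
proof -
  have "(\<Sum>i<n. \<pi> i * trans_P n i 0) = (\<Sum>i<n. 2/3 * \<pi> i + (if i = 0 then \<pi> i/6 else 0) + (if i = 1 then \<pi> i/6 else 0))"
  proof (rule sum.cong[OF refl])
    fix i assume "i \<in> {..<n}"
    hence i: "i < n" by simp
    show "\<pi> i * trans_P n i 0 = 2/3 * \<pi> i + (if i = 0 then \<pi> i/6 else 0) + (if i = 1 then \<pi> i/6 else 0)"
      unfolding P0_pt[OF assms i] distrib_left by (simp only: if_distrib) simp
  qed
  also have "\<dots> = 2/3 * (\<Sum>i<n. \<pi> i) + \<pi> 0 / 6 + \<pi> 1 / 6"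
    using assms by (simp add: sum.distrib sum_distrib_left)
  finally show ?thesis .
qed
definition bb :: "nat \<Rightarrow> real" where "bb k = Br (Suc k) - Br k"

lemma bb_rec: "bb (Suc (Suc k)) = 6 * bb (Suc k) - bb k"
  unfolding bb_def using Br_rec[of k] Br_rec[of "Suc k"] by simp

lemma bb0: "bb 0 = 1" and bb1: "bb (Suc 0) = 5"
  by (simp_all add: bb_def Br_def numeral_2_eq_2)

lemma bb_tele: "(\<Sum>i<n. bb (n - Suc i)) = Br n"
  using Br_tele[of n] unfolding bb_def sum.nat_diff_reindex[of "\<lambda>k. Br (Suc k) - Br k"] .

lemma Br_ge1: "n \<ge> 1 \<Longrightarrow> Br n \<ge> 1"
  using Br_pos[of "n - 1"] by simp

lemma uniq:
  assumes n3: "n \<ge> 3" and st: "stationary_prob n (trans_P n) \<pi>"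
  shows "\<forall>i<n. \<pi> i = bb (n - Suc i) / Br n"
proof -
  have eq: "\<And>j. j < n \<Longrightarrow> \<pi> j = (\<Sum>i<n. \<pi> i * trans_P n i j)" and s1: "(\<Sum>i<n. \<pi> i) = 1"
    using st unfolding stationary_prob_def by auto
  define c where "c = \<pi> (n - 1)"
  have key: "k + 1 < n \<Longrightarrow> \<pi> (n - 1 - k) = c * bb k \<and> \<pi> (n - 2 - k) = c * bb (Suc k)" for k
  proof (induction k)
    case 0
    have "\<pi> (n-1) = \<pi> (n-1-1)/6 + \<pi>(n-1)/6"
      using eq[of "n-1"] colj[OF n3, of "n-1" \<pi>] n3 by simp
    then have "\<pi> (n-2) = 5 * c" unfolding c_def by (simp add: numeral_2_eq_2)
    then show ?case by (simp add: bb0 bb1 c_def)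
  next
    case (Suc k)
    then have IH: "\<pi> (n - 1 - k) = c * bb k" "\<pi> (n - 2 - k) = c * bb (Suc k)" by auto
    define j where "j = n - 2 - k"
    have j1: "1 \<le> j" "j < n" "j + 1 < n" "j \<noteq> n - 1" using Suc.prems unfolding j_def by auto
    have "\<pi> j = \<pi> (j-1)/6 + \<pi>(j+1)/6"
      using eq[of j] colj[OF n3 j1(1,2), of \<pi>] j1 by simp
    moreover have "j + 1 = n - 1 - k" "j - 1 = n - 2 - Suc k" using Suc.prems unfolding j_def by auto
    ultimately have "\<pi> (n - 2 - Suc k) = 6 * \<pi> j - \<pi> (n - 1 - k)" by simp
    also have "\<dots> = c * bb (Suc (Suc k))" using IH bb_rec[of k] unfolding j_def
      by (simp add: numeral_2_eq_2 right_diff_distrib)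
    finally show ?case using IH(2) by (simp add: j_def)
  qed
  have pi_c: "\<pi> i = c * bb (n - Suc i)" if "i < n" for i
  proof -
    have "n - Suc i + 1 < n \<or> n - Suc i + 1 = n" using that by auto
    then show ?thesis
    proof
      assume "n - Suc i + 1 < n"
      from key[OF this] show ?thesis using that by (simp add: Suc_diff_Suc)
    next
      assume h: "n - Suc i + 1 = n"
      then have "i = 0" using that by simp
      from key[of "n - 2"] have "\<pi> (n - 2 - (n - 2)) = c * bb (Suc (n - 2))" using n3 by simp
      then show ?thesis using \<open>i = 0\<close> n3 by (simp add: Suc_diff_Suc numeral_2_eq_2)
    qed
  qed
  have "1 = (\<Sum>i<n. c * bb (n - Suc i))" using s1 pi_c by simp
  also have "\<dots> = c * Br n" by (simp add: sum_distrib_left[symmetric] bb_tele)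
  finally have "c = 1 / Br n" using Br_ge1[of n] n3 by (simp add: field_simps)
  then show ?thesis using pi_c by simp
qed

lemma exist:
  assumes n3: "n \<ge> 3"
  shows "stationary_prob n (trans_P n) (\<lambda>i. bb (n - Suc i) / Br n)"
proof -
  define \<pi> where "\<pi> = (\<lambda>i. bb (n - Suc i) / Br n)"
  have Bn: "Br n \<ge> 1" using Br_ge1[of n] n3 by simp
  have bbpos: "bb k \<ge> 0" for k using Br_pos[of k] unfolding bb_def by simp
  have nn: "\<forall>i<n. \<pi> i \<ge> 0" unfolding \<pi>_def using Bn bbpos by simp
  have s1: "(\<Sum>i<n. \<pi> i) = 1" unfolding \<pi>_def
    using Bn by (simp add: sum_divide_distrib[symmetric] bb_tele)
  obtain m where n: "n = m + 3" using n3 by (metis add.commute le_Suc_ex)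
  have e0: "\<pi> 0 = (\<Sum>i<n. \<pi> i * trans_P n i 0)"
  proof -
    have "5 * bb (m+2) = 4 * Br (m+3) + bb (m+1)"
      unfolding bb_def using Br_rec[of "m+1"] by (simp add: eval_nat_numeral)
    then have "\<pi> 0 = 2/3 + \<pi> 0 / 6 + \<pi> 1 / 6" unfolding \<pi>_def n using Bn
      by (simp add: field_simps n eval_nat_numeral)
    then show ?thesis using col0[OF n3, of \<pi>] s1 by simp
  qed
  have ej: "\<pi> j = (\<Sum>i<n. \<pi> i * trans_P n i j)" if j: "1 \<le> j" "j < n" for j
  proof (cases "j = n - 1")
    case True
    have "\<pi> (n-1) = \<pi> (n-2)/6 + \<pi> (n-1)/6" unfolding \<pi>_def using n3 Bn
      by (simp add: n eval_nat_numeral bb0 bb1 field_simps)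
    then show ?thesis using colj[OF n3 j, of \<pi>] True n3 by (simp add: numeral_2_eq_2)
  next
    case False
    have "j + 1 < n" using False j by auto
    define k where "k = n - 2 - j"
    have "n - Suc (j - 1) = Suc (Suc k)" "n - j = Suc (Suc k)" "n - Suc j = Suc k" "n - Suc (j+1) = k"
      using j False unfolding k_def by auto
    then have "\<pi> j = \<pi> (j-1)/6 + \<pi> (j+1)/6" unfolding \<pi>_def using Bn bb_rec[of k]
      by (simp add: field_simps)
    then show ?thesis using colj[OF n3 j, of \<pi>] False j \<open>j+1<n\<close> by simp
  qed
  have "\<forall>j<n. \<pi> j = (\<Sum>i<n. \<pi> i * trans_P n i j)"
  proof (intro allI impI)
    fix j assume "j < n"
    then show "\<pi> j = (\<Sum>i<n. \<pi> i * trans_P n i j)"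
      using e0 ej[of j] by (cases "j = 0") auto
  qed
  then have "stationary_prob n (trans_P n) \<pi>" using nn s1 unfolding stationary_prob_def by blast
  then show ?thesis unfolding \<pi>_def .
qed

theorem theorem2p3:
  fixes n :: nat
  assumes "n \<ge> 3"
  shows "(\<exists>\<pi>. stationary_prob n (trans_P n) \<pi>) \<and>
         (\<forall>\<pi>. stationary_prob n (trans_P n) \<pi> \<longrightarrow>
           (\<forall>i<n. \<pi> i = real_of_int (balancing (n - i) - balancing (n - i - 1))
                             / real_of_int (balancing n)))"
proof
  show "\<exists>\<pi>. stationary_prob n (trans_P n) \<pi>" using exist[OF assms] by blast
next
  show "\<forall>\<pi>. stationary_prob n (trans_P n) \<pi> \<longrightarrow>
           (\<forall>i<n. \<pi> i = real_of_int (balancing (n - i) - balancing (n - i - 1))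
                             / real_of_int (balancing n))"
  proof (intro allI impI)
    fix \<pi> i assume st: "stationary_prob n (trans_P n) \<pi>" and i: "i < n"
    have "\<pi> i = bb (n - Suc i) / Br n" using uniq[OF assms st] i by blast
    moreover have "Suc (n - Suc i) = n - i" using i by simp
    ultimately show "\<pi> i = real_of_int (balancing (n - i) - balancing (n - i - 1))
                             / real_of_int (balancing n)"
      by (simp add: bb_def Br_def)
  qed
qed

end
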